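(* Let $A,M\in\mathbb{C}^{n\times n}$ be Hermitian with $M$ positive definite, and let the eigenvalues of the pair $(A,M)$ be $\lambda_1<\lambda_2\le\cdots\le\lambda_n$, with $\mathcal{X}_1$ the eigenspace associated with $\lambda_1$. Put $A_{\lambda_1}=A-\lambda_1 M$. Let $T\in\mathbb{C}^{n\times n}$ be Hermitian positive definite. Let $x^{(0)}\in\mathbb{C}^n$ be neither an eigenvector of $(A,M)$ associated with $\lambda_1$ nor $M$-orthogonal to $\mathcal{X}_1$, and let $x^{(0)},x^{(1)},\ldots$ be the iterates of the following heuristic preconditioned CG iteration (for as long as it is defined): set $r^{(0)}=-A_{\lambda_1}x^{(0)}$, $\gamma^{(0)}=(Tr^{(0)})^*r^{(0)}$, $p^{(0)}=Tr^{(0)}$, and for $i=0,1,\ldots$: $w=A_{\lambda_1}p^{(i)}$, $\delta=\gamma^{(i)}/(w^*p^{(i)})$, $x^{(i+1)}=x^{(i)}+\delta p^{(i)}$, $r^{(i+1)}=r^{(i)}-\delta w$, $\gamma^{(i+1)}=(Tr^{(i+1)})^*r^{(i+1)}$, $p^{(i+1)}=Tr^{(i+1)}+(\gamma^{(i+1)}/\gamma^{(i)})p^{(i)}$. Then for every $i$, $x^{(i)}-x^{(0)}$ is $T^{-1}$-orthogonal to $\mathcal{X}_1$ (i.e. $y^*T^{-1}(x^{(i)}-x^{(0)})=0$ for all $y\in\mathcal{X}_1$), and $$\|x^{(i)}\|_M^2\ge\mu_1\|x^{(0)}\|_{T^{-1}}^2\big(\cos\angle_{T^{-1}}(x^{(0)},\mathcal{X}_1)\big)^2,$$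 where $\mu_1$ is the smallest eigenvalue of the matrix pair $(M,T^{-1})$.
   Context: $\|y\|_M=(y^*My)^{1/2}$, $\|y\|_{T^{-1}}=(y^*T^{-1}y)^{1/2}$. $\angle_{T^{-1}}(x,\mathcal{X}_1)$ is the angle between the vector $x$ and the subspace $\mathcal{X}_1$ with respect to the inner product $(u,v)\mapsto u^*T^{-1}v$, i.e. $\cos\angle_{T^{-1}}(x,\mathcal{X}_1)=\max_{y\in\mathcal{X}_1\setminus\{0\}}|y^*T^{-1}x|/(\|y\|_{T^{-1}}\|x\|_{T^{-1}})$. *)

theory Defs
  imports "HOL-Analysis.Analysis"
begin

definition cinner :: "complex^'n \<Rightarrow> complex^'n \<Rightarrow> complex" where
  "cinner y z = (\<Sum>i\<in>UNIV. cnj (y$i) * z$i)"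

definition hermitian_mat :: "complex^'n^'n \<Rightarrow> bool" where
  "hermitian_mat A \<longleftrightarrow> (\<forall>i j. A$i$j = cnj (A$j$i))"

definition posdef_mat :: "complex^'n^'n \<Rightarrow> bool" where
  "posdef_mat A \<longleftrightarrow> hermitian_mat A \<and> (\<forall>x. x \<noteq> 0 \<longrightarrow> Re (cinner x (A *v x)) > 0)"

definition pair_eigval :: "complex^'n^'n \<Rightarrow> complex^'n^'n \<Rightarrow> complex \<Rightarrow> bool" where
  "pair_eigval A B mu \<longleftrightarrow> (\<exists>v. v \<noteq> 0 \<and> A *v v = mu *s (B *v v))"

definition pair_eigspace :: "complex^'n^'n \<Rightarrow> complex^'n^'n \<Rightarrow> complex \<Rightarrow> (complex^'n) set" where
  "pair_eigspace A B mu = {v. A *v v = mu *s (B *v v)}"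

text \<open>Squared B-norm: y^* B y (real for Hermitian B).\<close>
definition sqnorm_mat :: "complex^'n^'n \<Rightarrow> complex^'n \<Rightarrow> real" where
  "sqnorm_mat B y = Re (cinner y (B *v y))"

definition norm_mat :: "complex^'n^'n \<Rightarrow> complex^'n \<Rightarrow> real" where
  "norm_mat B y = sqrt (sqnorm_mat B y)"

definition cos_angle :: "complex^'n^'n \<Rightarrow> complex^'n \<Rightarrow> (complex^'n) set \<Rightarrow> real" where
  "cos_angle B x X = Sup {cmod (cinner y (B *v x)) / (norm_mat B y * norm_mat B x) | y. y \<in> X \<and> y \<noteq> 0}"

definition shift_mat :: "complex^'n^'n \<Rightarrow> complex^'n^'n \<Rightarrow> complex \<Rightarrow> complex^'n^'n" where
  "shift_mat A M lam = (\<chi> i j. A$i$j - lam * M$i$j)"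

type_synonym 'n pcg_state = "(complex^'n) \<times> (complex^'n) \<times> complex \<times> (complex^'n)"

definition pcg_step :: "complex^'n^'n \<Rightarrow> complex^'n^'n \<Rightarrow>
    'n pcg_state \<Rightarrow>
    'n pcg_state" where
  "pcg_step Al T st =
     (let x = fst st; r = fst (snd st); g = fst (snd (snd st)); p = snd (snd (snd st));
         w = Al *v p; d = g / cinner w p; x' = x + (d *s p); r' = r - (d *s w);
         g' = cinner (T *v r') r'; p' = (T *v r') + ((g' / g) *s p)
     in (x', r', g', p'))"

definition pcg_init :: "complex^'n^'n \<Rightarrow> complex^'n^'n \<Rightarrow> complex^'n \<Rightarrow>
    'n pcg_state" where
  "pcg_init Al T x0 = (let r = - (Al *v x0) in (x0, r, cinner (T *v r) r, T *v r))"

primrec pcg :: "complex^'n^'n \<Rightarrow> complex^'n^'n \<Rightarrow> complex^'n \<Rightarrow> nat \<Rightarrow>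
    'n pcg_state" where
  "pcg Al T x0 0 = pcg_init Al T x0"
| "pcg Al T x0 (Suc i) = pcg_step Al T (pcg Al T x0 i)"

definition pcg_x where "pcg_x Al T x0 i = fst (pcg Al T x0 i)"
definition pcg_r where "pcg_r Al T x0 i = fst (snd (pcg Al T x0 i))"
definition pcg_gamma where "pcg_gamma Al T x0 i = fst (snd (snd (pcg Al T x0 i)))"
definition pcg_p where "pcg_p Al T x0 i = snd (snd (snd (pcg Al T x0 i)))"

text \<open>x^(k) is defined (no division by zero occurred): for all j < k, the denominator
  w^* p^(j) is nonzero, and gamma^(j) \<noteq> 0 whenever p^(j+1) is used (j+1 < k).\<close>
definition pcg_defined :: "complex^'n^'n \<Rightarrow> complex^'n^'n \<Rightarrow> complex^'n \<Rightarrow> nat \<Rightarrow> bool" where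
  "pcg_defined Al T x0 k \<longleftrightarrow> (\<forall>j<k. cinner (Al *v pcg_p Al T x0 j) (pcg_p Al T x0 j) \<noteq> 0
      \<and> (Suc j < k \<longrightarrow> pcg_gamma Al T x0 j \<noteq> 0))"

end

theory Submission
  imports Defs
begin

lemma cinner_add_right: "cinner y (a + b) = cinner y a + cinner y b"
  by (simp add: cinner_def distrib_left sum.distrib)
lemma cinner_add_left: "cinner (a + b) y = cinner a y + cinner b y"
  by (simp add: cinner_def distrib_right sum.distrib)
lemma cinner_diff_right: "cinner y (a - b) = cinner y a - cinner y b"
  by (simp add: cinner_def right_diff_distrib sum_subtractf)
lemma cinner_diff_left: "cinner (a - b) y = cinner a y - cinner b y"
  by (simp add: cinner_def left_diff_distrib sum_subtractf)
lemma cinner_scale_right: "cinner y (c *s a) = c * cinner y a"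
  by (simp add: cinner_def sum_distrib_left mult_ac)
lemma cinner_scale_left: "cinner (c *s a) y = cnj c * cinner a y"
  by (simp add: cinner_def sum_distrib_left mult_ac)
lemma cinner_minus_right: "cinner y (- a) = - cinner y a"
  by (simp add: cinner_def sum_negf)
lemma cinner_zero_right[simp]: "cinner y 0 = 0"
  by (simp add: cinner_def)
lemma cinner_zero_left[simp]: "cinner 0 y = 0"
  by (simp add: cinner_def)
lemma cinner_swap: "cinner y z = cnj (cinner z y)"
  by (simp add: cinner_def mult_ac)
lemma cinner_self: "cinner x x = of_real (\<Sum>i\<in>UNIV. (cmod (x$i))^2)"
  unfolding cinner_def of_real_sum
  proof (rule sum.cong)
  fix i show "cnj (x$i) * x$i = of_real ((cmod (x$i))^2)"
    using complex_norm_square[of "x$i"] by (simp add: mult.commute)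
qed simp
lemma cinner_self_eq0: "cinner x x = 0 \<longleftrightarrow> x = 0"
proof
  assume "cinner x x = 0"
  hence "(\<Sum>i\<in>UNIV. (cmod (x$i))^2) = 0" unfolding cinner_self of_real_eq_0_iff .
  hence "\<forall>i\<in>UNIV. (cmod (x$i))^2 = 0" by (subst (asm) sum_nonneg_eq_0_iff) auto
  thus "x = 0" by (simp add: vec_eq_iff)
qed simp

lemma herm_adj:
  assumes "hermitian_mat C"
  shows "cinner y (C *v z) = cinner (C *v y) z"
proof -
  have "cinner y (C *v z) = (\<Sum>i\<in>UNIV. \<Sum>j\<in>UNIV. cnj (y$i) * C$i$j * z$j)"
    by (simp add: cinner_def matrix_vector_mult_def sum_distrib_left mult_ac)
  also have "\<dots> = (\<Sum>j\<in>UNIV. \<Sum>i\<in>UNIV. cnj (y$i) * C$i$j * z$j)"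
    by (rule sum.swap)
  also have "\<dots> = (\<Sum>j\<in>UNIV. \<Sum>i\<in>UNIV. cnj (C$j$i * y$i) * z$j)"
    using assms unfolding hermitian_mat_def
    by (intro sum.cong refl) (metis complex_cnj_cnj complex_cnj_mult mult.commute)
  also have "\<dots> = cinner (C *v y) z"
    by (simp add: cinner_def matrix_vector_mult_def sum_distrib_right cnj_sum)
  finally show ?thesis .
qed

lemma herm_real:
  assumes "hermitian_mat C"
  shows "cinner x (C *v x) = of_real (Re (cinner x (C *v x)))"
proof -
  have "cinner x (C *v x) = cnj (cinner x (C *v x))"
    using herm_adj[OF assms, of x x] cinner_swap[of "C *v x" x] by simp
  thus ?thesis by (metis Reals_cnj_iff complex_is_Real_iff of_real_Re)
qed

lemma quad_expand:
  assumes "hermitian_mat C"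
  shows "cinner (x + c *s u) (C *v (x + c *s u)) =
     cinner x (C *v x) + c * cinner x (C *v u) + cnj c * cinner u (C *v x) + cnj c * c * cinner u (C *v u)"
  by (simp add: matrix_vector_right_distrib vector_scalar_commute cinner_add_left cinner_add_right
      cinner_scale_left cinner_scale_right algebra_simps)


lemma cinner_axis: "cinner (axis i 1) z = z$i"
proof -
  have "cinner (axis i 1) z = (\<Sum>k\<in>UNIV. if k = i then z$k else 0)"
    unfolding cinner_def by (rule sum.cong) (auto simp: axis_def)
  thus ?thesis by simp
qed

lemma mv_axis: "(C *v axis j 1) $ i = C$i$j"
proof -
  have "(C *v axis j 1) $ i = (\<Sum>k\<in>UNIV. if k = j then C$i$k else 0)"
    unfolding matrix_vector_mult_def vec_lambda_beta by (rule sum.cong) (auto simp: axis_def)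
  thus ?thesis by simp
qed

lemma adj_herm:
  assumes "\<And>y z. cinner y (C *v z) = cinner (C *v y) z"
  shows "hermitian_mat C"
  unfolding hermitian_mat_def
proof (intro allI)
  fix i j
  have "cinner (axis i 1) (C *v axis j 1) = C$i$j"
    by (simp add: cinner_axis mv_axis)
  moreover have "cinner (C *v axis i 1) (axis j 1) = cnj (C$j$i)"
    by (subst cinner_swap) (simp add: cinner_axis mv_axis)
  ultimately show "C$i$j = cnj (C$j$i)" using assms by metis
qed

lemma posdef_inv:
  assumes "posdef_mat T"
  shows "matrix_inv T ** T = mat 1 \<and> T ** matrix_inv T = mat 1 \<and> posdef_mat (matrix_inv T)"
proof -
  have hT: "hermitian_mat T" using assms by (simp add: posdef_mat_def)
  have "inj ((*v) T)"
  proof (rule inj_onI)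
    fix x y assume "T *v x = T *v y"
    hence "T *v (x - y) = 0" by (simp add: matrix_vector_mult_diff_distrib)
    hence "Re (cinner (x - y) (T *v (x - y))) = 0" by simp
    thus "x = y" using assms unfolding posdef_mat_def by (metis less_irrefl right_minus_eq)
  qed
  then obtain B where "B ** T = mat 1" using matrix_left_invertible_injective by blast
  hence "invertible T" using invertible_left_inverse by blast
  hence inv: "T ** matrix_inv T = mat 1 \<and> matrix_inv T ** T = mat 1"
    unfolding invertible_def matrix_inv_def by (rule someI_ex)
  define Ti where "Ti = matrix_inv T"
  have TTi: "T *v (Ti *v v) = v" for v using inv by (simp add: Ti_def matrix_vector_mul_assoc)
  have TiT: "Ti *v (T *v v) = v" for v using inv by (simp add: Ti_def matrix_vector_mul_assoc)
  have adj: "cinner u (Ti *v v) = cinner (Ti *v u) v" for u v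
    using herm_adj[OF hT, of "Ti *v u" "Ti *v v"] by (simp add: TTi)
  have herm: "hermitian_mat Ti" by (rule adj_herm) (rule adj)
  have pos: "Re (cinner x (Ti *v x)) > 0" if "x \<noteq> 0" for x
  proof -
    define y where "y = Ti *v x"
    have xy: "x = T *v y" by (simp add: y_def TTi)
    have "y \<noteq> 0" using that xy by auto
    hence "Re (cinner y (T *v y)) > 0" using assms unfolding posdef_mat_def by blast
    moreover have "cinner x (Ti *v x) = cinner y (T *v y)"
      using herm_adj[OF hT, of y y] by (simp add: xy TiT)
    ultimately show ?thesis by simp
  qed
  show ?thesis using inv herm pos by (simp add: posdef_mat_def Ti_def)
qed


lemma pcg_orth:
  assumes hAl: "hermitian_mat Al" and TiT: "Ti ** T = mat 1" and y: "Al *v y = 0"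
  shows "cinner y (pcg_r Al T x0 k) = 0 \<and> cinner y (Ti *v pcg_p Al T x0 k) = 0
     \<and> cinner y (Ti *v (pcg_x Al T x0 k - x0)) = 0"
proof -
  have TiTv: "Ti *v (T *v v) = v" for v using TiT by (simp add: matrix_vector_mul_assoc)
  have Aly: "cinner y (Al *v v) = 0" for v using herm_adj[OF hAl, of y v] y by simp
  show ?thesis
  proof (induction k)
    case 0
    show ?case
      by (simp add: pcg_r_def pcg_p_def pcg_x_def pcg_init_def Let_def TiTv cinner_minus_right Aly)
  next
    case (Suc k)
    obtain x r g p where st: "pcg Al T x0 k = (x, r, g, p)" by (cases "pcg Al T x0 k") auto
    have ih: "cinner y r = 0" "cinner y (Ti *v p) = 0" "cinner y (Ti *v (x - x0)) = 0"
      using Suc.IH by (simp_all add: pcg_r_def pcg_p_def pcg_x_def st)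
    define d where "d = g / cinner (Al *v p) p"
    define r' where "r' = r - d *s (Al *v p)"
    define g' where "g' = cinner (T *v r') r'"
    have S: "pcg Al T x0 (Suc k) = (x + d *s p, r', g', T *v r' + (g' / g) *s p)"
      by (simp add: st pcg_step_def Let_def d_def r'_def g'_def)
    have r'0: "cinner y r' = 0"
      by (simp add: r'_def cinner_diff_right cinner_scale_right ih Aly)
    have "x + d *s p - x0 = (x - x0) + d *s p" by (simp add: algebra_simps)
    hence X: "cinner y (Ti *v (x + d *s p - x0)) = 0"
      by (simp only:, simp add: matrix_vector_right_distrib vector_scalar_commute cinner_add_right cinner_scale_right ih)
    have P: "cinner y (Ti *v (T *v r' + (g' / g) *s p)) = 0"
      by (simp add: matrix_vector_right_distrib vector_scalar_commute cinner_add_right cinner_scale_right ih TiTv r'0)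
    show ?case using r'0 X P unfolding pcg_r_def pcg_p_def pcg_x_def S by simp
  qed
qed


lemma sq_scale: "sqnorm_mat C (of_real c *s z) = c^2 * sqnorm_mat C z"
  by (simp add: sqnorm_mat_def vector_scalar_commute cinner_scale_left cinner_scale_right power2_eq_square)

lemma sq_zero[simp]: "sqnorm_mat C 0 = 0"
  by (simp add: sqnorm_mat_def)

lemma Re_cinner_self: "Re (cinner u u) = (\<Sum>i\<in>UNIV. (cmod (u$i))^2)"
  by (simp add: cinner_self)

lemma Re_cinner_self_ge: "Re (cinner u u) \<ge> 0"
  by (simp add: Re_cinner_self sum_nonneg)

lemma Re_cinner_self_eq0: "Re (cinner u u) = 0 \<Longrightarrow> u = 0"
  by (metis cinner_self cinner_self_eq0 Re_cinner_self of_real_0)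

lemma quad_real:
  assumes "hermitian_mat C"
  shows "sqnorm_mat C (x + of_real t *s u) =
     sqnorm_mat C x + 2 * t * Re (cinner u (C *v x)) + t^2 * sqnorm_mat C u"
proof -
  have "Re (cinner x (C *v u)) = Re (cinner u (C *v x))"
    using herm_adj[OF assms, of x u] cinner_swap[of "C *v x" u] by simp
  thus ?thesis
    unfolding sqnorm_mat_def quad_expand[OF assms] by (simp add: power2_eq_square)
qed

lemma cont_sq: "continuous_on S (\<lambda>x. sqnorm_mat C x)"
  unfolding sqnorm_mat_def cinner_def matrix_vector_mult_def
  by (auto intro!: continuous_intros)


lemma scaleR_s: "c *\<^sub>R (z::complex^'n) = complex_of_real c *s z"
  unfolding scaleR_vec_def vector_scalar_mult_def by (simp add: scaleR_conv_of_real)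

lemma rayleigh:
  fixes M B :: "complex^'n^'n"
  assumes hM: "hermitian_mat M" and pB: "posdef_mat B"
  shows "\<exists>m. pair_eigval M B (of_real m) \<and> (\<forall>z. m * sqnorm_mat B z \<le> sqnorm_mat M z)"
proof -
  have hB: "hermitian_mat B" using pB by (simp add: posdef_mat_def)
  have Bpos: "sqnorm_mat B z > 0" if "z \<noteq> 0" for z
    using pB that by (simp add: posdef_mat_def sqnorm_mat_def)
  define q where "q z = sqnorm_mat M z / sqnorm_mat B z" for z
  define S where "S = sphere (0::complex^'n) 1"
  have cS: "compact S" by (simp add: S_def)
  have S0: "z \<noteq> 0" if "z \<in> S" for z using that by (auto simp: S_def)
  have neS: "S \<noteq> {}" by (simp add: S_def)
  have cq: "continuous_on S q"
    unfolding q_def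
    by (intro continuous_on_divide cont_sq) (metis S0 Bpos less_irrefl)
  obtain x where xS: "x \<in> S" and xmin: "\<And>y. y \<in> S \<Longrightarrow> q x \<le> q y"
    using continuous_attains_inf[OF cS neS cq] by blast
  define m where "m = q x"
  have x0: "x \<noteq> 0" using S0 xS .
  have ge: "m * sqnorm_mat B z \<le> sqnorm_mat M z" for z
  proof (cases "z = 0")
    case True thus ?thesis by simp
  next
    case False
    define c where "c = 1 / norm z"
    have cpos: "c \<noteq> 0" using False by (simp add: c_def)
    have "of_real c *s z = c *\<^sub>R z" by (simp only: scaleR_s)
    hence uS: "of_real c *s z \<in> S"
      using False by (simp add: S_def c_def)
    have "q (of_real c *s z) = q z"
      using cpos by (simp add: q_def sq_scale)
    hence "m \<le> q z" using xmin[OF uS] by (simp add: m_def)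
    thus ?thesis using Bpos[OF False] by (simp add: q_def pos_le_divide_eq)
  qed
  have fx: "sqnorm_mat M x - m * sqnorm_mat B x = 0"
    using Bpos[OF x0] by (simp add: m_def q_def)
  define u where "u = M *v x - of_real m *s (B *v x)"
  define N where "N = Re (cinner u u)"
  define F where "F = sqnorm_mat M u - m * sqnorm_mat B u"
  have cu: "Re (cinner u (M *v x)) - m * Re (cinner u (B *v x)) = N"
    by (simp add: N_def u_def cinner_diff_right cinner_scale_right)
  have quad: "0 \<le> 2 * t * N + t^2 * F" for t
  proof -
    have "0 \<le> sqnorm_mat M (x + of_real t *s u) - m * sqnorm_mat B (x + of_real t *s u)"
      using ge[of "x + of_real t *s u"] by simp
    also have "\<dots> = (sqnorm_mat M x - m * sqnorm_mat B x)
        + 2 * t * (Re (cinner u (M *v x)) - m * Re (cinner u (B *v x))) + t^2 * F"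
      unfolding quad_real[OF hM] quad_real[OF hB] F_def by (simp add: algebra_simps)
    finally show ?thesis using fx cu by simp
  qed
  have N0: "N \<ge> 0" unfolding N_def by (rule Re_cinner_self_ge)
  have "N = 0"
  proof (rule ccontr)
    assume "N \<noteq> 0"
    hence Np: "N > 0" using N0 by simp
    show False
    proof (cases "F \<le> 0")
      case True
      thus False using quad[of "-1"] Np by simp
    next
      case False
      hence Fp: "F > 0" by simp
      have "0 \<le> 2 * (- N / F) * N + (- N / F)^2 * F" by (rule quad)
      also have "\<dots> = - (N^2 / F)" using Fp by (simp add: power2_eq_square field_simps)
      moreover have "N^2 / F > 0" using Np Fp by simp
      ultimately show False by linarith
    qed
  qed
  hence "u = 0" unfolding N_def by (rule Re_cinner_self_eq0)
  hence "M *v x = of_real m *s (B *v x)" by (simp add: u_def)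
  hence "pair_eigval M B (of_real m)" using x0 by (auto simp: pair_eigval_def)
  thus ?thesis using ge by blast
qed


lemma sq_scale_c: "sqnorm_mat C (c *s z) = (cmod c)^2 * sqnorm_mat C z"
proof -
  have e: "cnj c * c = of_real ((cmod c)^2)" using complex_norm_square[of c] by (simp add: mult.commute)
  have "sqnorm_mat C (c *s z) = Re ((cnj c * c) * cinner z (C *v z))"
    by (simp only: sqnorm_mat_def vector_scalar_commute cinner_scale_left cinner_scale_right mult.assoc mult.left_commute)
  also have "\<dots> = Re (of_real ((cmod c)^2) * cinner z (C *v z))" by (simp only: e)
  also have "\<dots> = (cmod c)^2 * sqnorm_mat C z" by (simp add: sqnorm_mat_def algebra_simps)
  finally show ?thesis .
qed

lemma cs_ineq:
  assumes hB: "hermitian_mat B" and nn: "\<And>w. sqnorm_mat B w \<ge> 0" and vp: "sqnorm_mat B v > 0"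
  shows "(cmod (cinner v (B *v x)))^2 / sqnorm_mat B v \<le> sqnorm_mat B x"
proof -
  define a where "a = cinner v (B *v x)"
  define b where "b = sqnorm_mat B v"
  define c where "c = - (a / of_real b)"
  have vBv: "cinner v (B *v v) = of_real b" unfolding b_def sqnorm_mat_def by (rule herm_real[OF hB])
  have xBv: "cinner x (B *v v) = cnj a"
    unfolding a_def by (subst cinner_swap) (simp add: herm_adj[OF hB])
  have aa: "a * cnj a = of_real ((cmod a)^2)" using complex_norm_square[of a] by simp
  have bp: "b > 0" using vp by (simp add: b_def)
  have e1: "cinner (x + c *s v) (B *v (x + c *s v)) =
     cinner x (B *v x) + (c * cnj a + cnj c * a + cnj c * c * of_real b)"
    unfolding quad_expand[OF hB] xBv vBv a_def by (simp add: add.assoc)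
  have e2: "c * cnj a + cnj c * a + cnj c * c * of_real b = - of_real ((cmod a)^2 / b)"
    using bp aa unfolding c_def
    by (simp add: field_simps power2_eq_square)
  have "sqnorm_mat B (x + c *s v) = sqnorm_mat B x - (cmod a)^2 / b"
    unfolding sqnorm_mat_def e1 e2 by simp
  thus ?thesis using nn[of "x + c *s v"] by (simp add: a_def b_def)
qed


theorem lemma2p3:
  fixes A M T :: "complex^'n^'n" and lam1 mu1 :: real and x0 :: "complex^'n" and i :: nat
  assumes n2: "CARD('n) \<ge> 2"
    and hA: "hermitian_mat A" and pdM: "posdef_mat M" and pdT: "posdef_mat T"
    and lam1_eig: "pair_eigval A M (complex_of_real lam1)"
    and lam1_min: "\<forall>mu. pair_eigval A M mu \<longrightarrow> lam1 \<le> Re mu"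
    and lam1_simple: "\<exists>v. v \<noteq> 0 \<and> pair_eigspace A M (complex_of_real lam1) = {c *s v | c. True}"
    and x0_not_eig: "x0 \<notin> pair_eigspace A M (complex_of_real lam1)"
    and x0_not_Morth: "\<exists>y\<in>pair_eigspace A M (complex_of_real lam1). cinner y (M *v x0) \<noteq> 0"
    and mu1_eig: "pair_eigval M (matrix_inv T) (complex_of_real mu1)"
    and mu1_min: "\<forall>mu. pair_eigval M (matrix_inv T) mu \<longrightarrow> mu1 \<le> Re mu"
    and def_i: "pcg_defined (shift_mat A M (complex_of_real lam1)) T x0 i"
  shows "(\<forall>y\<in>pair_eigspace A M (complex_of_real lam1).
            cinner y (matrix_inv T *v (pcg_x (shift_mat A M (complex_of_real lam1)) T x0 i - x0)) = 0)
       \<and> sqnorm_mat M (pcg_x (shift_mat A M (complex_of_real lam1)) T x0 i)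
           \<ge> mu1 * sqnorm_mat (matrix_inv T) x0
               * (cos_angle (matrix_inv T) x0 (pair_eigspace A M (complex_of_real lam1)))^2"
proof -
  define Al where "Al = shift_mat A M (complex_of_real lam1)"
  define Ti where "Ti = matrix_inv T"
  define X where "X = pair_eigspace A M (complex_of_real lam1)"
  define xi where "xi = pcg_x Al T x0 i"
  have hM: "hermitian_mat M" using pdM by (simp add: posdef_mat_def)
  have hAl: "hermitian_mat Al"
    unfolding hermitian_mat_def
  proof (intro allI)
    fix k j
    have a: "A$k$j = cnj (A$j$k)" using hA unfolding hermitian_mat_def by blast
    have m: "M$k$j = cnj (M$j$k)" using hM unfolding hermitian_mat_def by blast
    show "Al$k$j = cnj (Al$j$k)" by (simp add: Al_def shift_mat_def a m)
  qed
  have Alv: "Al *v y = A *v y - complex_of_real lam1 *s (M *v y)" for y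
    by (simp add: Al_def shift_mat_def matrix_vector_mult_def vec_eq_iff sum_subtractf
        sum_distrib_left left_diff_distrib mult.assoc)
  have Aly: "Al *v y = 0" if "y \<in> X" for y
    using that by (simp add: X_def pair_eigspace_def Alv)
  have TiT: "Ti ** T = mat 1" and pdTi: "posdef_mat Ti"
    using posdef_inv[OF pdT] by (simp_all add: Ti_def)
  have hTi: "hermitian_mat Ti" using pdTi by (simp add: posdef_mat_def)
  have part1: "\<forall>y\<in>X. cinner y (Ti *v (xi - x0)) = 0"
    using pcg_orth[OF hAl TiT Aly] by (simp add: xi_def)
  have posTi: "sqnorm_mat Ti w > 0" if "w \<noteq> 0" for w
    using pdTi that by (simp add: posdef_mat_def sqnorm_mat_def)
  have nnTi: "sqnorm_mat Ti w \<ge> 0" for w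
    using posTi[of w] by (cases "w = 0") auto
  have nnM: "sqnorm_mat M w \<ge> 0" for w
    using pdM by (cases "w = 0") (auto simp: posdef_mat_def sqnorm_mat_def intro: less_imp_le)
  obtain v where v0: "v \<noteq> 0" and Xv: "X = {c *s v | c. True}"
    using lam1_simple by (auto simp: X_def)
  have vX: "v \<in> X" unfolding Xv by (rule CollectI, rule exI[of _ 1]) simp
  have "0 \<in> X" unfolding Xv by (rule CollectI, rule exI[of _ 0]) simp
  hence x00: "x0 \<noteq> 0" using x0_not_eig by (auto simp: X_def)
  define sv where "sv = sqnorm_mat Ti v"
  define sx where "sx = sqnorm_mat Ti x0"
  have svp: "sv > 0" using posTi[OF v0] by (simp add: sv_def)
  have sxp: "sx > 0" using posTi[OF x00] by (simp add: sx_def)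
  define a where "a = cinner v (Ti *v x0)"
  define K where "K = cmod a / (norm_mat Ti v * norm_mat Ti x0)"
  have setK: "{cmod (cinner y (Ti *v x0)) / (norm_mat Ti y * norm_mat Ti x0) | y. y \<in> X \<and> y \<noteq> 0} = {K}"
  proof (intro equalityI subsetI)
    fix t assume "t \<in> {cmod (cinner y (Ti *v x0)) / (norm_mat Ti y * norm_mat Ti x0) | y. y \<in> X \<and> y \<noteq> 0}"
    then obtain c where t: "t = cmod (cinner (c *s v) (Ti *v x0)) / (norm_mat Ti (c *s v) * norm_mat Ti x0)"
      and c0: "c *s v \<noteq> 0" unfolding Xv by blast
    have cp: "cmod c > 0" using c0 by auto
    have "norm_mat Ti (c *s v) = cmod c * norm_mat Ti v"
      by (simp add: norm_mat_def sq_scale_c real_sqrt_mult)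
    moreover have "cmod (cinner (c *s v) (Ti *v x0)) = cmod c * cmod a"
      by (simp add: cinner_scale_left a_def norm_mult)
    ultimately show "t \<in> {K}" using cp by (simp add: t K_def)
  next
    fix t assume "t \<in> {K}"
    thus "t \<in> {cmod (cinner y (Ti *v x0)) / (norm_mat Ti y * norm_mat Ti x0) | y. y \<in> X \<and> y \<noteq> 0}"
      using vX v0 by (auto simp: K_def a_def)
  qed
  have cosK: "cos_angle Ti x0 X = K" unfolding cos_angle_def setK by simp
  have cos2: "(cos_angle Ti x0 X)^2 = (cmod a)^2 / (sv * sx)"
    using svp sxp
    by (simp add: cosK K_def norm_mat_def power_divide power_mult_distrib sv_def sx_def)
  have rhs: "mu1 * sx * (cos_angle Ti x0 X)^2 = mu1 * ((cmod a)^2 / sv)"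
    using sxp svp by (simp add: cos2 field_simps)
  have "cinner v (Ti *v (xi - x0)) = 0" using part1 vX by blast
  hence axi: "a = cinner v (Ti *v xi)"
    by (simp add: a_def matrix_vector_mult_diff_distrib cinner_diff_right)
  have cs: "(cmod a)^2 / sv \<le> sqnorm_mat Ti xi"
    unfolding axi sv_def by (rule cs_ineq[OF hTi nnTi posTi[OF v0]])
  obtain m where meig: "pair_eigval M Ti (of_real m)" and mge: "\<And>z. m * sqnorm_mat Ti z \<le> sqnorm_mat M z"
    using rayleigh[OF hM pdTi] by blast
  have mu1m: "mu1 \<le> m" using mu1_min meig by (force simp: Ti_def)
  have part2: "mu1 * sx * (cos_angle Ti x0 X)^2 \<le> sqnorm_mat M xi"
  proof (cases "mu1 \<le> 0")
    case True
    have "mu1 * ((cmod a)^2 / sv) \<le> 0"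
      using True svp by (intro mult_nonpos_nonneg) auto
    thus ?thesis using rhs nnM[of xi] by linarith
  next
    case False
    have "mu1 * ((cmod a)^2 / sv) \<le> mu1 * sqnorm_mat Ti xi"
      using False cs by (intro mult_left_mono) auto
    also have "\<dots> \<le> m * sqnorm_mat Ti xi"
      using mu1m nnTi[of xi] by (rule mult_right_mono)
    also have "\<dots> \<le> sqnorm_mat M xi" by (rule mge)
    finally show ?thesis using rhs by simp
  qed
  show ?thesis using part1 part2
    by (simp add: Al_def Ti_def X_def xi_def sx_def)
qed

end
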